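(* Let $E$ be a real vector space of dimension $2$ and let $f,g$ be linear endomorphisms of $E$. Let $(t_n)_{n\in\mathbb{N}}$ be a strictly increasing sequence of integers with $t_0=1$. Then $$\big(\forall n\in\mathbb{N},\ \exp(t_n f+g)=\exp(t_n f)\circ\exp(g)\big)\iff f\circ g=g\circ f.$$
   Context: $\exp$ denotes the exponential of a linear endomorphism, $\exp(u)=\sum_{k\ge 0}u^k/k!$. *)

theory Defs
  imports "HOL-Analysis.Analysis"
begin

text \<open>Exponential of a linear endomorphism u of a finite-dimensional real space:
  exp(u) = sum over k of u^k / k!, with u^k the k-fold composition (evaluated pointwise;
  the series converges absolutely in finite dimension).\<close>
definition lexp :: "('a::euclidean_space \<Rightarrow> 'a) \<Rightarrow> ('a \<Rightarrow> 'a)" where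
  "lexp u = (\<lambda>x. \<Sum>k. (1 / fact k) *\<^sub>R (u ^^ k) x)"

end

theory Submission
  imports Defs
begin

typedef (overloaded) 'a endo = "UNIV :: ('a::euclidean_space \<Rightarrow>\<^sub>L 'a) set"
  morphisms Rep_endo Abs_endo by simp

setup_lifting type_definition_endo

instantiation endo :: (euclidean_space) real_normed_algebra_1
begin

lift_definition norm_endo :: "'a endo \<Rightarrow> real" is norm .
lift_definition minus_endo :: "'a endo \<Rightarrow> 'a endo \<Rightarrow> 'a endo" is "(-)" .
lift_definition plus_endo :: "'a endo \<Rightarrow> 'a endo \<Rightarrow> 'a endo" is "(+)" .
lift_definition uminus_endo :: "'a endo \<Rightarrow> 'a endo" is uminus .
lift_definition zero_endo :: "'a endo" is 0 .
lift_definition scaleR_endo :: "real \<Rightarrow> 'a endo \<Rightarrow> 'a endo" is scaleR .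
lift_definition times_endo :: "'a endo \<Rightarrow> 'a endo \<Rightarrow> 'a endo" is blinfun_compose .
lift_definition one_endo :: "'a endo" is id_blinfun .

definition dist_endo :: "'a endo \<Rightarrow> 'a endo \<Rightarrow> real"
  where "dist_endo a b = norm (a - b)"

definition uniformity_endo :: "('a endo \<times> 'a endo) filter" where
  "uniformity_endo = (INF e\<in>{0 <..}. principal {(x, y). dist x y < e})"

definition open_endo :: "'a endo set \<Rightarrow> bool"
  where "open_endo S = (\<forall>x\<in>S. \<forall>\<^sub>F (x', y) in uniformity. x' = x \<longrightarrow> y \<in> S)"

definition sgn_endo :: "'a endo \<Rightarrow> 'a endo"
  where "sgn_endo x = scaleR (inverse (norm x)) x"

instance
proof
  fix a b c :: "'a endo" and r s :: real
  show "a + b + c = a + (b + c)" by transfer (simp add: add.assoc)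
  show "a + b = b + a" by transfer (simp add: add.commute)
  show "0 + a = a" by transfer simp
  show "- a + a = 0" by transfer simp
  show "a - b = a + - b" by transfer simp
  show "r *\<^sub>R (a + b) = r *\<^sub>R a + r *\<^sub>R b" by transfer (simp add: scaleR_add_right)
  show "(r + s) *\<^sub>R a = r *\<^sub>R a + s *\<^sub>R a" by transfer (simp add: scaleR_add_left)
  show "r *\<^sub>R s *\<^sub>R a = (r * s) *\<^sub>R a" by transfer simp
  show "1 *\<^sub>R a = a" by transfer simp
  show "a * b * c = a * (b * c)" by transfer (rule blinfun_eqI, simp)
  show "(a + b) * c = a * c + b * c" by transfer (rule blinfun_eqI, simp add: blinfun.bilinear_simps)
  show "a * (b + c) = a * b + a * c" by transfer (rule blinfun_eqI, simp add: blinfun.bilinear_simps)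
  show "r *\<^sub>R a * b = r *\<^sub>R (a * b)" by transfer (rule blinfun_eqI, simp add: blinfun.bilinear_simps)
  show "a * r *\<^sub>R b = r *\<^sub>R (a * b)" by transfer (rule blinfun_eqI, simp add: blinfun.bilinear_simps)
  show "1 * a = a" by transfer (rule blinfun_eqI, simp)
  show "a * 1 = a" by transfer (rule blinfun_eqI, simp)
  show "(0::'a endo) \<noteq> 1"
  proof transfer
    obtain x :: 'a where "x \<noteq> 0" using nonzero_Basis by (metis ex_in_conv nonempty_Basis)
    then show "(0::'a \<Rightarrow>\<^sub>L 'a) \<noteq> id_blinfun"
      by (metis blinfun.zero_left blinfun_apply_id_blinfun)
  qed
  show "dist a b = norm (a - b)" by (simp add: dist_endo_def)
  show "sgn a = inverse (norm a) *\<^sub>R a" by (simp add: sgn_endo_def)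
  show "(uniformity :: ('a endo \<times> 'a endo) filter) = (INF e\<in>{0<..}. principal {(x, y). dist x y < e})"
    by (simp add: uniformity_endo_def)
  show "\<And>U :: 'a endo set. open U = (\<forall>x\<in>U. \<forall>\<^sub>F (x', y) in uniformity. x' = x \<longrightarrow> y \<in> U)"
    by (simp add: open_endo_def)
  show "(norm a = 0) = (a = 0)" by transfer simp
  show "norm (a + b) \<le> norm a + norm b" by transfer (rule norm_triangle_ineq)
  show "norm (r *\<^sub>R a) = \<bar>r\<bar> * norm a" by transfer simp
  show "norm (a * b) \<le> norm a * norm b" by transfer (rule norm_blinfun_compose)
  show "norm (1::'a endo) = 1" by transfer simp
qed
end

lemma dist_endo_Rep: "dist a b = dist (Rep_endo a) (Rep_endo b)"
  unfolding dist_endo_def dist_norm by transfer simp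

instance endo :: (euclidean_space) banach
proof
  fix X :: "nat \<Rightarrow> 'a endo"
  assume "Cauchy X"
  then have "Cauchy (\<lambda>n. Rep_endo (X n))"
    unfolding Cauchy_def dist_endo_Rep by simp
  then obtain L where L: "(\<lambda>n. Rep_endo (X n)) \<longlonglongrightarrow> L"
    using convergent_def Cauchy_convergent_iff by blast
  have "X \<longlonglongrightarrow> Abs_endo L"
    using L unfolding lim_sequentially dist_endo_Rep by (simp add: Abs_endo_inverse)
  then show "convergent X" by (rule convergentI)
qed

definition ap :: "'a::euclidean_space endo \<Rightarrow> 'a \<Rightarrow> 'a" where
  "ap E = blinfun_apply (Rep_endo E)"

definition mk :: "('a::euclidean_space \<Rightarrow> 'a) \<Rightarrow> 'a endo" where
  "mk f = Abs_endo (Blinfun f)"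

lemma ap_mk: "linear f \<Longrightarrow> ap (mk f) = f"
  unfolding ap_def mk_def
  by (simp add: Abs_endo_inverse bounded_linear_Blinfun_apply linear_conv_bounded_linear)

lemma ap_inject: "ap E = ap F \<Longrightarrow> E = F"
  unfolding ap_def by (metis Rep_endo_inject blinfun_apply_inject)

lemma ap_times: "ap (E * F) = ap E \<circ> ap F"
  unfolding ap_def by transfer auto

lemma ap_plus: "ap (E + F) x = ap E x + ap F x"
  unfolding ap_def by transfer (simp add: blinfun.bilinear_simps)

lemma ap_scaleR: "ap (r *\<^sub>R E) x = r *\<^sub>R ap E x"
  unfolding ap_def by transfer (simp add: blinfun.bilinear_simps)

lemma ap_one: "ap 1 x = x"
  unfolding ap_def by transfer simp

lemma ap_power: "ap (E ^ n) = ap E ^^ n"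
  by (induction n) (auto simp: ap_times fun_eq_iff ap_one)

lemma bounded_linear_ap_left: "bounded_linear (\<lambda>E. ap E x)"
proof -
  have "bounded_linear Rep_endo"
    by (rule bounded_linear_intro[where K=1]) (simp_all add: plus_endo.rep_eq scaleR_endo.rep_eq norm_endo.rep_eq)
  then show ?thesis unfolding ap_def
    using bounded_linear_compose[OF blinfun.bounded_linear_left] by blast
qed

lemma lexp_ap: assumes "linear u" shows "lexp u = ap (exp (mk u))"
proof
  fix x
  have "ap (exp (mk u)) x = ap (\<Sum>n. mk u ^ n /\<^sub>R fact n) x" by (simp add: exp_def)
  also have "\<dots> = (\<Sum>n. ap (mk u ^ n /\<^sub>R fact n) x)"
    using bounded_linear.suminf[OF bounded_linear_ap_left summable_exp_generic] by metis
  also have "\<dots> = (\<Sum>k. (1 / fact k) *\<^sub>R (u ^^ k) x)"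
    by (simp add: ap_scaleR ap_power ap_mk[OF assms] divide_inverse_commute)
  finally show "lexp u x = ap (exp (mk u)) x" by (simp add: lexp_def)
qed

lemma mk_lin: "linear f \<Longrightarrow> linear g \<Longrightarrow> mk (\<lambda>x. r *\<^sub>R f x + g x) = r *\<^sub>R mk f + mk g"
  by (rule ap_inject) (auto simp: fun_eq_iff ap_plus ap_scaleR ap_mk linear_compose_add linear_compose_scale_right intro!: linear_compose_add linear_compose_scale_right)


definition Cf :: "real \<Rightarrow> real" where
  "Cf d = (if d \<ge> 0 then cosh (sqrt d) else cos (sqrt (-d)))"
definition Sf :: "real \<Rightarrow> real" where
  "Sf d = (if d > 0 then sinh (sqrt d) / sqrt d else if d = 0 then 1 else sin (sqrt (-d)) / sqrt (-d))"

lemma pow_even: "even n \<Longrightarrow> (x::real) ^ n = (x^2) ^ (n div 2)"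
  by (elim evenE) (simp add: power_mult)
lemma pow_odd: "odd n \<Longrightarrow> (x::real) ^ n = x * (x^2) ^ (n div 2)"
  by (elim oddE) (simp add: power_mult)

lemma neg_pow: "(- ((x::real)^2))^k = (-1)^k * x^(2 * k)"
  by (metis mult_minus1 power_mult power_mult_distrib)

lemma cc_sums: "(\<lambda>n. if even n then d ^ (n div 2) / fact n else 0) sums Cf d"
proof (cases "d \<ge> 0")
  case True
  define x where "x = sqrt d"
  have d: "d = x^2" using True by (simp add: x_def)
  have "(\<lambda>n. if even n then x ^ n /\<^sub>R fact n else 0) sums cosh x" by (rule cosh_converges)
  moreover have "(\<lambda>n. if even n then x ^ n /\<^sub>R fact n else 0) = (\<lambda>n. if even n then d ^ (n div 2) / fact n else 0)"
  proof
    fix n :: nat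
    show "(if even n then x ^ n /\<^sub>R fact n else 0) = (if even n then d ^ (n div 2) / fact n else 0)"
    proof (cases "even n")
      case True
      have "x ^ n = d ^ (n div 2)" unfolding d by (rule pow_even[OF True])
      then show ?thesis using True by (simp add: divide_inverse_commute)
    qed simp
  qed
  ultimately show ?thesis using True by (simp add: Cf_def x_def)
next
  case False
  define x where "x = sqrt (-d)"
  have d: "d = - (x^2)" using False by (simp add: x_def)
  have "(\<lambda>n. cos_coeff n *\<^sub>R x^n) sums cos x" using cos_converges[of x] by simp
  moreover have "(\<lambda>n. cos_coeff n *\<^sub>R x^n) = (\<lambda>n. if even n then d ^ (n div 2) / fact n else 0)"
  proof
    fix n show "cos_coeff n *\<^sub>R x^n = (if even n then d ^ (n div 2) / fact n else 0)"
    proof (cases "even n")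
      case True
      have "d ^ (n div 2) = (-1) ^ (n div 2) * x ^ (2 * (n div 2))" unfolding d by (rule neg_pow)
      also have "2 * (n div 2) = n" using True by simp
      finally show ?thesis using True by (simp add: cos_coeff_def)
    qed (simp add: cos_coeff_def)
  qed
  ultimately show ?thesis using False by (simp add: Cf_def x_def)
qed

lemma ss_sums: "(\<lambda>n. if odd n then d ^ (n div 2) / fact n else 0) sums Sf d"
proof -
  consider "d > 0" | "d = 0" | "d < 0" by linarith
  then show ?thesis
  proof cases
    case 1
    define x where "x = sqrt d"
    have d: "d = x^2" and x: "x > 0" using 1 by (simp_all add: x_def)
    have "(\<lambda>n. (if even n then 0 else x ^ n /\<^sub>R fact n) / x) sums (sinh x / x)"
      by (rule sums_divide, rule sinh_converges)
    moreover have "(\<lambda>n. (if even n then 0 else x ^ n /\<^sub>R fact n) / x) = (\<lambda>n. if odd n then d ^ (n div 2) / fact n else 0)"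
    proof
      fix n show "(if even n then 0 else x ^ n /\<^sub>R fact n) / x = (if odd n then d ^ (n div 2) / fact n else 0)"
      proof (cases "even n")
        case False
        have "x ^ n = x * d ^ (n div 2)" unfolding d by (rule pow_odd[OF False])
        then show ?thesis using x False by (simp add: divide_inverse_commute)
      qed simp
    qed
    ultimately show ?thesis using 1 by (simp add: Sf_def x_def)
  next
    case 2
    have "(\<lambda>n. if n = 1 then (1::real) else 0) sums 1" using sums_single[of 1 "\<lambda>_. 1::real"] by simp
    moreover have "(\<lambda>n. if n = 1 then (1::real) else 0) = (\<lambda>n. if odd n then d ^ (n div 2) / fact n else 0)"
    proof
      fix n :: nat show "(if n = 1 then (1::real) else 0) = (if odd n then d ^ (n div 2) / fact n else 0)"
        using 2 by (cases "n = 1") (auto elim!: oddE)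
    qed
    ultimately show ?thesis using 2 by (simp add: Sf_def)
  next
    case 3
    define x where "x = sqrt (-d)"
    have d: "d = - (x^2)" and x: "x > 0" using 3 by (simp_all add: x_def)
    have "(\<lambda>n. (sin_coeff n *\<^sub>R x^n) / x) sums (sin x / x)"
      by (rule sums_divide, rule sin_converges)
    moreover have "(\<lambda>n. (sin_coeff n *\<^sub>R x^n) / x) = (\<lambda>n. if odd n then d ^ (n div 2) / fact n else 0)"
    proof
      fix n
      show "(sin_coeff n *\<^sub>R x^n) / x = (if odd n then d ^ (n div 2) / fact n else 0)"
      proof (cases "even n")
        case True then show ?thesis by (simp add: sin_coeff_def)
      next
        case False
        then obtain k where n: "n = 2 * k+1" by (elim oddE)
        have "d ^ (n div 2) = (-1) ^ k * x ^ (2 * k)" unfolding d n by (simp add: neg_pow)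
        moreover have "x ^ n / x = x ^ (2 * k)" using x unfolding n by simp
        moreover have "(n - Suc 0) div 2 = k" unfolding n by simp
        moreover have "(-1::real)^k * x^n / (fact n * x) = (-1)^k * (x^n/x) / fact n" by simp
        ultimately show ?thesis using False by (simp add: sin_coeff_def)
      qed
    qed
    ultimately show ?thesis using 3 by (simp add: Sf_def x_def)
  qed
qed

lemma CS_id: "Cf d ^ 2 - d * Sf d ^ 2 = 1"
proof -
  consider "d > 0" | "d = 0" | "d < 0" by linarith
  then show ?thesis
  proof cases
    case 1
    define x where "x = sqrt d"
    have d: "d = x^2" and x: "x > 0" using 1 by (simp_all add: x_def)
    show ?thesis using 1 x cosh_square_eq[of x] by (simp add: Cf_def Sf_def flip: x_def) (simp add: d field_simps)
  next
    case 2 then show ?thesis by (simp add: Cf_def Sf_def)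
  next
    case 3
    define x where "x = sqrt (-d)"
    have d: "d = - (x^2)" and x: "x > 0" using 3 by (simp_all add: x_def)
    show ?thesis using 3 x sin_cos_squared_add[of x] by (simp add: Cf_def Sf_def flip: x_def) (simp add: d field_simps)
  qed
qed

lemma Sf_zero: assumes "Sf d = 0" shows "\<exists>k::nat. 0 < k \<and> d = - ((real k * pi) ^ 2)"
proof -
  have "d < 0"
  proof (rule ccontr)
    assume "\<not> d < 0"
    then consider "d > 0" | "d = 0" by linarith
    then show False
    proof cases
      case 1 then have "sinh (sqrt d) > 0" by simp
      then show False using assms 1 by (simp add: Sf_def)
    next
      case 2 then show False using assms by (simp add: Sf_def)
    qed
  qed
  define x where "x = sqrt (-d)"
  have d: "d = - (x^2)" and x: "x > 0" using \<open>d < 0\<close> by (simp_all add: x_def)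
  have "sin x = 0" using assms \<open>d < 0\<close> x by (simp add: Sf_def flip: x_def)
  then obtain i :: int where i: "x = of_int i * pi" by (auto simp: sin_zero_iff_int2)
  then have "i > 0" using x by (simp add: zero_less_mult_iff)
  then show ?thesis using i d by (intro exI[of _ "nat i"]) auto
qed

lemma Cf_sq: "Cf (x^2) = cosh x"
  by (simp add: Cf_def)

definition sh :: "real \<Rightarrow> real" where "sh x = (if x = 0 then 1 else sinh x / x)"

lemma Sf_sq: "Sf (x^2) = sh x"
proof (cases "x = 0")
  case False
  then have "x^2 > 0" by simp
  moreover have "sinh \<bar>x\<bar> / \<bar>x\<bar> = sinh x / x"
    by (cases "x \<ge> 0") (auto simp: abs_of_nonneg abs_of_neg)
  ultimately show ?thesis using False by (simp add: Sf_def sh_def)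
qed (simp add: Sf_def sh_def)


lemma exp_gt_strict: assumes "x \<noteq> 0" shows "1 + x < exp (x::real)"
proof (cases "1 + x/2 \<ge> 0")
  case True
  have "exp x = exp (x/2) ^ 2" by (simp flip: exp_of_nat_mult)
  moreover have "(1 + x/2)^2 \<le> exp (x/2) ^ 2"
    using True exp_ge_add_one_self[of "x/2"] by (intro power_mono) auto
  moreover have "x^2 > 0" using assms by simp
  then have "1 + x < (1 + x/2)^2" by (simp add: power2_eq_square field_simps)
  ultimately show ?thesis by linarith
next
  case False
  then have "1 + x < 0" by linarith
  then show ?thesis using exp_gt_zero[of x] by linarith
qed

definition ph :: "real \<Rightarrow> real" where "ph y = (if y = 0 then 1 else (exp y - 1) / y)"

lemma ph_pos_gt: "y > 0 \<Longrightarrow> ph y > 1"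
  using exp_gt_strict[of y] by (simp add: ph_def field_simps)
lemma ph_neg_lt: "y < 0 \<Longrightarrow> ph y < 1"
  using exp_gt_strict[of y] by (simp add: ph_def field_simps)

lemma ph_deriv: fixes y :: real assumes "y \<noteq> 0"
  shows "DERIV (\<lambda>z. (exp z - 1) / z) y :> (y * exp y - (exp y - 1)) / y^2"
  using assms by (auto intro!: derivative_eq_intros simp: power2_eq_square field_simps)

lemma ph_deriv_pos: fixes y :: real assumes "y \<noteq> 0" shows "(y * exp y - (exp y - 1)) / y^2 > 0"
proof -
  have "1 - y < exp (-y)" using exp_gt_strict[of "-y"] assms by simp
  then have "(1 - y) * exp y < exp (-y) * exp y" by simp
  then have "(1 - y) * exp y < 1" by (simp flip: exp_add)
  then show ?thesis using assms by (simp add: algebra_simps)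
qed

lemma ph_mono_same: assumes "a < b" "0 < a \<or> b < 0" shows "ph a < ph b"
proof -
  have nz: "\<And>x. a \<le> x \<Longrightarrow> x \<le> b \<Longrightarrow> x \<noteq> 0" using assms by auto
  have "(\<lambda>y. (exp y - 1) / y) a < (\<lambda>y. (exp y - 1) / y) b"
    using assms(1) by (rule DERIV_pos_imp_increasing) (use nz ph_deriv ph_deriv_pos in blast)
  then show ?thesis using nz[of a] nz[of b] assms(1) by (simp add: ph_def)
qed

lemma ph_mono: assumes "a < b" shows "ph a < ph b"
proof -
  consider "0 < a" | "b < 0" | "a \<le> 0" "0 \<le> b" by linarith
  then show ?thesis
  proof cases
    case 3
    then consider "a = 0" "0 < b" | "a < 0" "b = 0" | "a < 0" "0 < b" using assms by linarith
    then show ?thesis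
    proof cases
      case 1 then show ?thesis using ph_pos_gt[of b] by (simp add: ph_def)
    next
      case 2 then show ?thesis using ph_neg_lt[of a] by (simp add: ph_def)
    next
      case 3 then show ?thesis using ph_neg_lt[of a] ph_pos_gt[of b] by linarith
    qed
  qed (use assms ph_mono_same in auto)
qed

lemma ph_inj: "ph a = ph b \<Longrightarrow> a = b"
  using ph_mono[of a b] ph_mono[of b a] by (cases a b rule: linorder_cases) auto

lemma sh_ph: "sh x = exp (-x) * ph (2 * x)"
proof (cases "x = 0")
  case False
  have "exp (-x) * exp (2 * x) = exp x" by (simp flip: exp_add)
  then show ?thesis using False
    by (simp add: sh_def ph_def sinh_def field_simps exp_minus)
qed (simp add: sh_def ph_def)

lemma R1: assumes "sh (b - a) = sh b * exp a" "sh (b - a) = sh a * exp b"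
  shows "a = 0 \<and> b = 0"
proof -
  have "exp (a - b) * ph (2 * b - 2 * a) = exp (a - b) * ph (2 * b)"
    using assms(1) unfolding sh_ph by (simp add: algebra_simps exp_diff exp_minus field_simps)
  then have "ph (2 * b - 2 * a) = ph (2 * b)" by simp
  then have a: "a = 0" using ph_inj by fastforce
  have b: "b = 0"
  proof (rule ccontr)
    assume "b \<noteq> 0"
    have "sh b = exp b" using assms(2) a by (simp add: sh_def)
    then have "exp (-b) * ph (2 * b) = exp b" by (simp add: sh_ph)
    then have "ph (2 * b) = exp (2 * b)" by (simp add: exp_minus field_simps flip: exp_add)
    then have "exp (2 * b) - 1 = 2 * b * exp (2 * b)" using \<open>b \<noteq> 0\<close> by (simp add: ph_def field_simps)
    then have "(exp (2 * b) - 1) * exp (-2 * b) = 2 * b * exp (2 * b) * exp (-2 * b)" by simp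
    then have "1 - exp (-2 * b) = 2 * b" by (simp add: algebra_simps flip: exp_add)
    moreover have "1 + (-2 * b) < exp (-2 * b)" using exp_gt_strict[of "-2 * b"] \<open>b \<noteq> 0\<close> by simp
    ultimately show False by linarith
  qed
  show ?thesis using a b by simp
qed


lemma indep:
  fixes p q r u v w l m :: real
  assumes "l * p + m * u = 0" "l * q + m * v = 0" "l * r + m * w = 0" "l \<noteq> 0 \<or> m \<noteq> 0"
  shows "(q * w - r * v)/2 = 0 \<and> p * v - q * u = 0 \<and> r * u - p * w = 0"
proof -
  have mw: "m * w = -(l * r)" and mv: "m * v = -(l * q)" and mu: "m * u = -(l * p)" using assms(1-3) by linarith+
  have lr: "l * r = -(m * w)" and lq: "l * q = -(m * v)" and lp: "l * p = -(m * u)" using assms(1-3) by linarith+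
  have m1: "m * (q * w - r * v) = 0"
  proof -
    have "m * (q * w - r * v) = q * (m * w) - r * (m * v)" by algebra
    also have "\<dots> = q * (-(l * r)) - r * (-(l * q))" using mw mv mu lr lq lp by simp
    finally show ?thesis by simp
  qed
  have l1: "l * (q * w - r * v) = 0"
  proof -
    have "l * (q * w - r * v) = (l * q) * w - (l * r) * v" by algebra
    also have "\<dots> = (-(m * v)) * w - (-(m * w)) * v" using mw mv mu lr lq lp by simp
    finally show ?thesis by simp
  qed
  have m2: "m * (p * v - q * u) = 0"
  proof -
    have "m * (p * v - q * u) = p * (m * v) - q * (m * u)" by algebra
    also have "\<dots> = p * (-(l * q)) - q * (-(l * p))" using mw mv mu lr lq lp by simp
    finally show ?thesis by simp
  qed
  have l2: "l * (p * v - q * u) = 0"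
  proof -
    have "l * (p * v - q * u) = (l * p) * v - (l * q) * u" by algebra
    also have "\<dots> = (-(m * u)) * v - (-(m * v)) * u" using mw mv mu lr lq lp by simp
    finally show ?thesis by simp
  qed
  have m3: "m * (r * u - p * w) = 0"
  proof -
    have "m * (r * u - p * w) = r * (m * u) - p * (m * w)" by algebra
    also have "\<dots> = r * (-(l * p)) - p * (-(l * r))" using mw mv mu lr lq lp by simp
    finally show ?thesis by simp
  qed
  have l3: "l * (r * u - p * w) = 0"
  proof -
    have "l * (r * u - p * w) = (l * r) * u - (l * p) * w" by algebra
    also have "\<dots> = (-(m * w)) * u - (-(m * u)) * w" using mw mv mu lr lq lp by simp
    finally show ?thesis by simp
  qed
  show ?thesis using m1 m2 m3 l1 l2 l3 assms(4) by auto
qed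

lemma x_sh: "x * sh x = sinh x"
  by (simp add: sh_def)

lemma L1real:
  fixes p q r u v w :: real
  defines "da \<equiv> p^2 + q * r" and "db \<equiv> u^2 + v * w" and "dc \<equiv> (p+u)^2 + (q+v) * (r+w)"
  defines "k1 \<equiv> (q * w - r * v)/2" and "k2 \<equiv> p * v - q * u" and "k3 \<equiv> r * u - p * w"
  assumes E1: "Sf dc * (p+u) = Sf da * Cf db * p + Cf da * Sf db * u + Sf da * Sf db * k1"
      and E2: "Sf dc * (q+v) = Sf da * Cf db * q + Cf da * Sf db * v + Sf da * Sf db * k2"
      and E3: "Sf dc * (r+w) = Sf da * Cf db * r + Cf da * Sf db * w + Sf da * Sf db * k3"
      and K: "\<not> (k1 = 0 \<and> k2 = 0 \<and> k3 = 0)"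
  shows "Sf da = 0 \<and> Sf db = 0 \<and> Sf dc = 0"
proof (cases "Sf da * Sf db = 0")
  case True
  have e1: "(Sf dc - Sf da * Cf db) * p + (Sf dc - Cf da * Sf db) * u = 0" using E1 True by (simp add: algebra_simps)
  have e2: "(Sf dc - Sf da * Cf db) * q + (Sf dc - Cf da * Sf db) * v = 0" using E2 True by (simp add: algebra_simps)
  have e3: "(Sf dc - Sf da * Cf db) * r + (Sf dc - Cf da * Sf db) * w = 0" using E3 True by (simp add: algebra_simps)
  have h: "Sf dc = Sf da * Cf db \<and> Sf dc = Cf da * Sf db"
  proof (rule ccontr)
    assume "\<not> ?thesis"
    then show False using indep[OF e1 e2 e3] K unfolding k1_def k2_def k3_def by auto
  qed
  have ca: "Cf da ^ 2 - da * Sf da ^ 2 = 1" and cb: "Cf db ^ 2 - db * Sf db ^ 2 = 1" by (rule CS_id)+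
  show ?thesis
  proof (cases "Sf da = 0")
    case True
    then have "Cf da \<noteq> 0" using ca by auto
    then show ?thesis using h True by auto
  next
    case False
    then have "Sf db = 0" using \<open>Sf da * Sf db = 0\<close> by simp
    then have "Cf db \<noteq> 0" using cb by auto
    then show ?thesis using h \<open>Sf db = 0\<close> by auto
  qed
next
  case False
  define sz where "sz = Sf da * Sf db"
  define al where "al = (Sf dc - Sf da * Cf db) / sz"
  define be where "be = (Sf dc - Cf da * Sf db) / sz"
  define sg where "sg = p * u + (q * w + r * v)/2"
  have sz: "sz \<noteq> 0" using False by (simp add: sz_def)
  have sal: "sz * al = Sf dc - Sf da * Cf db" and sbe: "sz * be = Sf dc - Cf da * Sf db"
    using sz by (simp_all add: al_def be_def)
  have "sz * k1 = sz * (al * p + be * u)"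
  proof -
    have "sz * (al * p + be * u) = (sz * al) * p + (sz * be) * u" by algebra
    also have "\<dots> = (Sf dc - Sf da * Cf db) * p + (Sf dc - Cf da * Sf db) * u" by (simp only: sal sbe)
    also have "\<dots> = sz * k1" using E1 unfolding sz_def by algebra
    finally show ?thesis by (rule sym)
  qed
  then have K1: "k1 = al * p + be * u" using sz by simp
  have "sz * k2 = sz * (al * q + be * v)"
  proof -
    have "sz * (al * q + be * v) = (sz * al) * q + (sz * be) * v" by algebra
    also have "\<dots> = (Sf dc - Sf da * Cf db) * q + (Sf dc - Cf da * Sf db) * v" by (simp only: sal sbe)
    also have "\<dots> = sz * k2" using E2 unfolding sz_def by algebra
    finally show ?thesis by (rule sym)
  qed
  then have K2: "k2 = al * q + be * v" using sz by simp
  have "sz * k3 = sz * (al * r + be * w)"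
  proof -
    have "sz * (al * r + be * w) = (sz * al) * r + (sz * be) * w" by algebra
    also have "\<dots> = (Sf dc - Sf da * Cf db) * r + (Sf dc - Cf da * Sf db) * w" by (simp only: sal sbe)
    also have "\<dots> = sz * k3" using E3 unfolding sz_def by algebra
    finally show ?thesis by (rule sym)
  qed
  then have K3: "k3 = al * r + be * w" using sz by simp
  have cA1: "(q * k3 - r * k2)/2 = da * u - sg * p" unfolding k2_def k3_def da_def sg_def by (simp add: power2_eq_square field_simps algebra_simps)
  have cA2: "p * k2 - q * k1 = da * v - sg * q" unfolding k1_def k2_def da_def sg_def by (simp add: power2_eq_square field_simps algebra_simps)
  have cA3: "r * k1 - p * k3 = da * w - sg * r" unfolding k1_def k3_def da_def sg_def by (simp add: power2_eq_square field_simps algebra_simps)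
  have cB1: "(v * k3 - w * k2)/2 = sg * u - db * p" unfolding k2_def k3_def db_def sg_def by (simp add: power2_eq_square field_simps algebra_simps)
  have cB2: "u * k2 - v * k1 = sg * v - db * q" unfolding k1_def k2_def db_def sg_def by (simp add: power2_eq_square field_simps algebra_simps)
  have cB3: "w * k1 - u * k3 = sg * w - db * r" unfolding k1_def k3_def db_def sg_def by (simp add: power2_eq_square field_simps algebra_simps)
  have a1: "(al * be + sg) * p + (be^2 - da) * u = 0"
  proof -
    have "(q * k3 - r * k2)/2 = (q * (al * r + be * w) - r * (al * q + be * v))/2" by (simp only: K2 K3)
    also have "\<dots> = be * ((q * w - r * v)/2)" by (simp add: field_simps algebra_simps)
    also have "\<dots> = be * k1" by (simp only: k1_def)
    finally have "(q * k3 - r * k2)/2 = be * k1" .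
    then have "be * (al * p + be * u) = da * u - sg * p" using cA1 K1 by simp
    then show ?thesis by (simp add: power2_eq_square algebra_simps)
  qed
  have a2: "(al * be + sg) * q + (be^2 - da) * v = 0"
  proof -
    have "p * k2 - q * k1 = p * (al * q + be * v) - q * (al * p + be * u)" by (simp only: K1 K2)
    also have "\<dots> = be * (p * v - q * u)" by (simp add: field_simps algebra_simps)
    also have "\<dots> = be * k2" by (simp only: k2_def)
    finally have "p * k2 - q * k1 = be * k2" .
    then have "be * (al * q + be * v) = da * v - sg * q" using cA2 K2 by simp
    then show ?thesis by (simp add: power2_eq_square algebra_simps)
  qed
  have a3: "(al * be + sg) * r + (be^2 - da) * w = 0"
  proof -
    have "r * k1 - p * k3 = r * (al * p + be * u) - p * (al * r + be * w)" by (simp only: K1 K3)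
    also have "\<dots> = be * (r * u - p * w)" by (simp add: field_simps algebra_simps)
    also have "\<dots> = be * k3" by (simp only: k3_def)
    finally have "r * k1 - p * k3 = be * k3" .
    then have "be * (al * r + be * w) = da * w - sg * r" using cA3 K3 by simp
    then show ?thesis by (simp add: power2_eq_square algebra_simps)
  qed
  have b1: "(al^2 - db) * p + (al * be + sg) * u = 0"
  proof -
    have "(v * k3 - w * k2)/2 = (v * (al * r + be * w) - w * (al * q + be * v))/2" by (simp only: K2 K3)
    also have "\<dots> = - al * ((q * w - r * v)/2)" by (simp add: field_simps algebra_simps)
    also have "\<dots> = - al * k1" by (simp only: k1_def)
    finally have "(v * k3 - w * k2)/2 = - al * k1" .
    then have "- al * (al * p + be * u) = sg * u - db * p" using cB1 K1 by simp
    then show ?thesis by (simp add: power2_eq_square algebra_simps)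
  qed
  have b2: "(al^2 - db) * q + (al * be + sg) * v = 0"
  proof -
    have "u * k2 - v * k1 = u * (al * q + be * v) - v * (al * p + be * u)" by (simp only: K1 K2)
    also have "\<dots> = - al * (p * v - q * u)" by (simp add: field_simps algebra_simps)
    also have "\<dots> = - al * k2" by (simp only: k2_def)
    finally have "u * k2 - v * k1 = - al * k2" .
    then have "- al * (al * q + be * v) = sg * v - db * q" using cB2 K2 by simp
    then show ?thesis by (simp add: power2_eq_square algebra_simps)
  qed
  have b3: "(al^2 - db) * r + (al * be + sg) * w = 0"
  proof -
    have "w * k1 - u * k3 = w * (al * p + be * u) - u * (al * r + be * w)" by (simp only: K1 K3)
    also have "\<dots> = - al * (r * u - p * w)" by (simp add: field_simps algebra_simps)
    also have "\<dots> = - al * k3" by (simp only: k3_def)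
    finally have "w * k1 - u * k3 = - al * k3" .
    then have "- al * (al * r + be * w) = sg * w - db * r" using cB3 K3 by simp
    then show ?thesis by (simp add: power2_eq_square algebra_simps)
  qed
  have Kfalse: "\<not> (l \<noteq> 0 \<or> m \<noteq> 0)" if "l * p + m * u = 0" "l * q + m * v = 0" "l * r + m * w = 0" for l m
    using indep[OF that] K unfolding k1_def k2_def k3_def by blast
  have abs: "al * be + sg = 0" "be^2 = da" using Kfalse[OF a1 a2 a3] by auto
  have al2: "al^2 = db" using Kfalse[OF b1 b2 b3] by auto
  have dc: "dc = (be - al)^2"
  proof -
    have "dc = da + 2 * sg + db" unfolding dc_def da_def db_def sg_def by (simp add: power2_eq_square field_simps algebra_simps)
    then show ?thesis using abs al2 by (simp add: power2_eq_square algebra_simps)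
  qed
  have Sa: "Sf da = sh be" "Cf da = cosh be" using abs(2) Sf_sq Cf_sq by metis+
  have Sb: "Sf db = sh al" "Cf db = cosh al" using al2 Sf_sq Cf_sq by metis+
  have Sc: "Sf dc = sh (be - al)" using dc Sf_sq by metis
  have eq1: "sh (be - al) = sh be * exp al"
  proof -
    have "Sf dc = Sf da * Cf db + al * sz" using sz by (simp add: al_def)
    then have "sh (be - al) = sh be * cosh al + sh be * (al * sh al)"
      using Sa Sb Sc by (simp add: sz_def algebra_simps)
    then show ?thesis by (simp add: x_sh cosh_plus_sinh algebra_simps flip: distrib_left)
  qed
  have eq2: "sh (be - al) = sh al * exp be"
  proof -
    have "Sf dc = Cf da * Sf db + be * sz" using sz by (simp add: be_def)
    then have "sh (be - al) = sh al * cosh be + sh al * (be * sh be)"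
      using Sa Sb Sc by (simp add: sz_def algebra_simps)
    then show ?thesis by (simp add: x_sh cosh_plus_sinh algebra_simps flip: distrib_left)
  qed
  have "al = 0 \<and> be = 0" using R1[OF eq1 eq2] by simp
  then have "k1 = 0 \<and> k2 = 0 \<and> k3 = 0" using K1 K2 K3 by simp
  then show ?thesis using K by simp
qed


lemma sq_arg:
  fixes p q r k1 k2 k3 :: real
  assumes neg: "p^2 + q * r < 0" and O: "2 * p * k1 + q * k3 + r * k2 = 0" and N: "k1^2 + k2 * k3 = 0"
  shows "k1 = 0 \<and> k2 = 0 \<and> k3 = 0"
proof -
  have id: "q^2 * (k1^2+k2 * k3) - q * k2 * (2 * p * k1 + q * k3 + r * k2) = (q * k1 - p * k2)^2 - (p^2+q * r) * k2^2"
    by (simp add: power2_eq_square algebra_simps)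
  then have z: "(q * k1 - p * k2)^2 - (p^2+q * r) * k2^2 = 0" using O N by simp
  have "(q * k1 - p * k2)^2 \<ge> 0" by simp
  moreover have "(p^2+q * r) * k2^2 \<le> 0" using neg by (intro mult_nonpos_nonneg) auto
  ultimately have z1: "(q * k1 - p * k2)^2 = 0" and z2: "(p^2+q * r) * k2^2 = 0" using z by linarith+
  have k2: "k2 = 0" using z2 neg by simp
  have "q \<noteq> 0"
  proof
    assume "q = 0" then show False using neg by simp
  qed
  then have k1: "k1 = 0" using z1 k2 by simp
  have "q * k3 = 0" using O k1 k2 by simp
  then have "k3 = 0" using \<open>q \<noteq> 0\<close> by simp
  then show ?thesis using k1 k2 by simp
qed

lemma sq_diff_bound:
  fixes P Q D :: int
  assumes "P^2 - Q^2 = D" "D \<noteq> 0"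
  shows "\<bar>P\<bar> \<le> \<bar>D\<bar>"
proof -
  define a where "a = \<bar>P\<bar>"
  define b where "b = \<bar>Q\<bar>"
  have ab: "a \<ge> 0" "b \<ge> 0" by (simp_all add: a_def b_def)
  have D: "D = (a - b) * (a + b)"
    using assms(1) unfolding a_def b_def by (simp add: power2_eq_square algebra_simps flip: abs_mult)
  consider "a > b" | "a < b" | "a = b" by linarith
  then show ?thesis
  proof cases
    case 1
    then have "(a - b) * (a + b) \<ge> 1 * (a + b)" using ab by (intro mult_right_mono) auto
    then show ?thesis using D ab unfolding a_def by simp
  next
    case 2
    then have "(b - a) * (a + b) \<ge> 1 * (a + b)" using ab by (intro mult_right_mono) auto
    then have "-D \<ge> a + b" using D by (simp add: algebra_simps)
    then show ?thesis using ab unfolding a_def by simp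
  next
    case 3 then show ?thesis using D assms(2) by simp
  qed
qed

lemma strict_mono_int_ge: fixes t :: "nat \<Rightarrow> int" assumes "strict_mono t" shows "t n \<ge> t 0 + int n"
proof (induction n)
  case (Suc n)
  have "t n < t (Suc n)" using assms by (simp add: strict_mono_def)
  then show ?case using Suc by simp
qed simp

lemma NT:
  fixes t :: "nat \<Rightarrow> int" and N ka j :: int and m :: "nat \<Rightarrow> int"
  assumes "strict_mono t" "t 0 = 1" "ka \<noteq> 0"
    and H: "\<And>n. (m n)^2 = (t n)^2 * ka^2 - t n * N + j^2"
  shows "N^2 = 4 * ka^2 * j^2"
proof (rule ccontr)
  define D where "D = N^2 - 4 * ka^2 * j^2"
  assume "N^2 \<noteq> 4 * ka^2 * j^2"
  then have D0: "D \<noteq> 0" by (simp add: D_def)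
  have bound: "\<bar>2 * ka^2 * t n - N\<bar> \<le> \<bar>D\<bar>" for n
  proof (rule sq_diff_bound[OF _ D0])
    show "(2 * ka^2 * t n - N)^2 - (2 * ka * m n)^2 = D"
      unfolding D_def power_mult_distrib H[of n] by (simp add: power2_eq_square algebra_simps)
  qed
  define n where "n = nat (\<bar>D\<bar> + \<bar>N\<bar>)"
  have tn: "t n \<ge> 1 + \<bar>D\<bar> + \<bar>N\<bar>" using strict_mono_int_ge[OF assms(1), of n] assms(2) by (simp add: n_def)
  have "ka^2 \<ge> 1" using assms(3) by (simp add: power2_eq_square) (smt (verit) mult_le_cancel_left1 zero_less_mult_iff)
  then have "ka^2 * t n \<ge> 1 * t n" using tn by (intro mult_right_mono) auto
  then have "2 * ka^2 * t n - N > \<bar>D\<bar>" using tn by linarith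
  then show False using bound[of n] by linarith
qed

lemma main_real:
  fixes p q r u v w :: real and t :: "nat \<Rightarrow> int"
  defines "da \<equiv> p^2 + q * r" and "db \<equiv> u^2 + v * w" and "sg \<equiv> p * u + (q * w + r * v)/2"
  assumes "strict_mono t" "t 0 = 1"
    and H: "\<And>n. Sf ((real_of_int (t n))^2 * da) = 0 \<and> Sf db = 0
              \<and> Sf ((real_of_int (t n) * p + u)^2 + (real_of_int (t n) * q + v) * (real_of_int (t n) * r + w)) = 0"
  shows "(q * w - r * v)/2 = 0 \<and> p * v - q * u = 0 \<and> r * u - p * w = 0"
proof -
  obtain ka :: nat where ka: "0 < ka" "da = - ((real ka * pi)^2)"
    using Sf_zero H[of 0] assms(5) by auto
  obtain j :: nat where j: "db = - ((real j * pi)^2)"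
    using Sf_zero H[of 0] by blast
  have "\<exists>mm::nat. (real_of_int (t n) * p + u)^2 + (real_of_int (t n) * q + v) * (real_of_int (t n) * r + w) = - ((real mm * pi)^2)" for n
    using Sf_zero H[of n] by blast
  then obtain m :: "nat \<Rightarrow> nat" where m: "\<And>n. (real_of_int (t n) * p + u)^2 + (real_of_int (t n) * q + v) * (real_of_int (t n) * r + w) = - ((real (m n) * pi)^2)"
    by metis
  have ident: "(T * p + u)^2 + (T * q + v) * (T * r + w) = T^2 * da + 2 * T * sg + db" for T :: real
    unfolding da_def db_def sg_def by (simp add: power2_eq_square field_simps algebra_simps)
  have pi2: "pi^2 \<noteq> 0" by simp
  define N :: int where "N = int ka^2 + int j^2 - int (m 0)^2"
  have sg: "2 * sg = of_int N * pi^2"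
  proof -
    have "- ((real (m 0) * pi)^2) = da + 2 * sg + db" using m[of 0] ident[of 1] assms(5) by simp
    then show ?thesis unfolding ka j N_def by (simp add: power_mult_distrib algebra_simps)
  qed
  have eqn: "int (m n)^2 = (t n)^2 * int ka^2 - t n * N + int j^2" for n
  proof -
    define T where "T = real_of_int (t n)"
    have "- ((real (m n) * pi)^2) = T^2 * da + T * (2 * sg) + db" using m[of n] ident[of T] unfolding T_def by simp
    then have "(real (m n)^2 - (T^2 * real ka^2 - T * of_int N + real j^2)) * pi^2 = 0"
      unfolding ka j sg by (simp add: power_mult_distrib algebra_simps)
    then have "real (m n)^2 = T^2 * real ka^2 - T * of_int N + real j^2" using pi2 by simp
    then have "real_of_int (int (m n)^2) = real_of_int ((t n)^2 * int ka^2 - t n * N + int j^2)"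
      unfolding T_def by simp
    then show ?thesis by (simp only: of_int_eq_iff)
  qed
  have NN: "N^2 = 4 * (int ka)^2 * (int j)^2"
    by (rule NT[OF assms(4,5), of "int ka" "\<lambda>n. int (m n)"]) (use ka(1) eqn in auto)
  have "sg^2 = da * db"
  proof -
    have "(2 * sg)^2 = of_int (N^2) * (pi^2)^2" unfolding sg by (simp add: power_mult_distrib)
    also have "\<dots> = 4 * (real ka)^2 * (real j)^2 * (pi^2)^2" unfolding NN by simp
    finally have "4 * sg^2 = 4 * ((real ka)^2 * (real j)^2 * (pi^2)^2)" by (simp add: power_mult_distrib)
    then show ?thesis unfolding ka j by (simp add: power_mult_distrib power2_eq_square algebra_simps)
  qed
  have neg: "p^2 + q * r < 0" using ka unfolding da_def by simp
  define k1 where "k1 = (q * w - r * v)/2"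
  define k2 where "k2 = p * v - q * u"
  define k3 where "k3 = r * u - p * w"
  have O: "2 * p * k1 + q * k3 + r * k2 = 0" unfolding k1_def k2_def k3_def by (simp add: field_simps algebra_simps)
  have "k1^2 + k2 * k3 = sg^2 - da * db"
    unfolding k1_def k2_def k3_def sg_def da_def db_def by (simp add: power2_eq_square field_simps algebra_simps)
  then have N0: "k1^2 + k2 * k3 = 0" using \<open>sg^2 = da * db\<close> by simp
  show ?thesis using sq_arg[OF neg O N0] unfolding k1_def k2_def k3_def by simp
qed


lemma exp_sq:
  fixes M :: "'b::{real_normed_algebra_1,banach}"
  assumes MM: "M * M = d *\<^sub>R 1"
  shows "exp M = Cf d *\<^sub>R 1 + Sf d *\<^sub>R M"
proof -
  have pw: "M ^ n = (if even n then d ^ (n div 2) *\<^sub>R 1 else d ^ (n div 2) *\<^sub>R M)" for n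
  proof (induction n)
    case (Suc n)
    show ?case
    proof (cases "even n")
      case True
      then have "M ^ Suc n = d ^ (n div 2) *\<^sub>R M" using Suc by simp
      then show ?thesis using True by simp
    next
      case False
      then have "M ^ Suc n = d ^ (n div 2) *\<^sub>R (M * M)" using Suc by simp
      also have "\<dots> = d ^ Suc (n div 2) *\<^sub>R 1" using MM by simp
      finally show ?thesis using False by (simp add: odd_Suc_div_two)
    qed
  qed simp
  have trm: "M ^ n /\<^sub>R fact n = (if even n then d ^ (n div 2) / fact n else 0) *\<^sub>R 1
                + (if odd n then d ^ (n div 2) / fact n else 0) *\<^sub>R M" for n
    by (simp add: pw divide_inverse_commute)
  have "(\<lambda>n. (if even n then d ^ (n div 2) / fact n else 0) *\<^sub>R 1
                + (if odd n then d ^ (n div 2) / fact n else 0) *\<^sub>R M) sums (Cf d *\<^sub>R 1 + Sf d *\<^sub>R M)"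
    by (intro sums_add sums_scaleR_left cc_sums ss_sums)
  then have "(\<lambda>n. M ^ n /\<^sub>R fact n) sums (Cf d *\<^sub>R 1 + Sf d *\<^sub>R M)" by (simp only: trm)
  then show ?thesis unfolding exp_def by (rule sums_unique[symmetric])
qed

lemma exp_shift:
  fixes M :: "'b::{real_normed_algebra_1,banach}"
  shows "exp (c *\<^sub>R 1 + M) = exp c *\<^sub>R exp M"
proof -
  have "(c *\<^sub>R 1) * M = M * (c *\<^sub>R 1)" by simp
  then have "exp (c *\<^sub>R 1 + M) = exp (c *\<^sub>R (1::'b)) * exp M" by (rule exp_add_commuting)
  also have "exp (c *\<^sub>R (1::'b)) = exp c *\<^sub>R 1"
    using exp_of_real[of c, where 'a='b] by (simp add: of_real_def)
  finally show ?thesis by simp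
qed

lemma linear_ap: "linear (ap E)"
  unfolding ap_def by (rule bounded_linear.linear[OF blinfun.bounded_linear_right])

locale twodim =
  fixes e1 e2 :: "'a::euclidean_space"
  assumes B: "Basis = {e1, e2}" and ne: "e1 \<noteq> e2"
begin

lemma inn: "e1 \<bullet> e1 = 1" "e2 \<bullet> e2 = 1" "e1 \<bullet> e2 = 0" "e2 \<bullet> e1 = 0"
proof -
  have h: "e1 \<in> Basis" "e2 \<in> Basis" using B by auto
  show "e1 \<bullet> e1 = 1" "e2 \<bullet> e2 = 1" using h by (simp_all add: inner_Basis)
  show "e1 \<bullet> e2 = 0" using inner_Basis[OF h] ne by simp
  show "e2 \<bullet> e1 = 0" using inner_Basis[OF h(2) h(1)] ne by simp
qed

lemma repr: "x = (x \<bullet> e1) *\<^sub>R e1 + (x \<bullet> e2) *\<^sub>R e2"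
proof -
  have "x = (\<Sum>b\<in>Basis. (x \<bullet> b) *\<^sub>R b)" by (simp add: euclidean_representation)
  also have "\<dots> = (x \<bullet> e1) *\<^sub>R e1 + (x \<bullet> e2) *\<^sub>R e2" unfolding B using ne by (simp add: sum.insert)
  finally show ?thesis .
qed

lemma vec_eq: "(a *\<^sub>R e1 + b *\<^sub>R e2 = c *\<^sub>R e1 + d *\<^sub>R e2) \<longleftrightarrow> a = c \<and> b = d"
proof
  assume h: "a *\<^sub>R e1 + b *\<^sub>R e2 = c *\<^sub>R e1 + d *\<^sub>R e2"
  have "(a *\<^sub>R e1 + b *\<^sub>R e2) \<bullet> e1 = (c *\<^sub>R e1 + d *\<^sub>R e2) \<bullet> e1"
       "(a *\<^sub>R e1 + b *\<^sub>R e2) \<bullet> e2 = (c *\<^sub>R e1 + d *\<^sub>R e2) \<bullet> e2" using h by simp_all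
  then show "a = c \<and> b = d" by (simp add: inner_add_left inn)
qed simp

definition matf :: "real \<Rightarrow> real \<Rightarrow> real \<Rightarrow> real \<Rightarrow> 'a \<Rightarrow> 'a" where
  "matf a b c d x = (a * (x \<bullet> e1) + b * (x \<bullet> e2)) *\<^sub>R e1 + (c * (x \<bullet> e1) + d * (x \<bullet> e2)) *\<^sub>R e2"

lemma linear_matf: "linear (matf a b c d)"
  by (rule linearI) (simp_all add: matf_def inner_add_left algebra_simps scaleR_add_left)

definition mat :: "real \<Rightarrow> real \<Rightarrow> real \<Rightarrow> real \<Rightarrow> 'a endo" where
  "mat a b c d = mk (matf a b c d)"

lemma ap_mat: "ap (mat a b c d) = matf a b c d"
  unfolding mat_def by (rule ap_mk[OF linear_matf])

lemma mat_eqI: "a = a' \<Longrightarrow> b = b' \<Longrightarrow> c = c' \<Longrightarrow> d = d' \<Longrightarrow> mat a b c d = mat a' b' c' d'"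
  by simp

lemma mat_mult: "mat a b c d * mat a' b' c' d' = mat (a * a'+b * c') (a * b'+b * d') (c * a'+d * c') (c * b'+d * d')"
proof (rule ap_inject, rule ext)
  fix x
  show "ap (mat a b c d * mat a' b' c' d') x = ap (mat (a * a'+b * c') (a * b'+b * d') (c * a'+d * c') (c * b'+d * d')) x"
    unfolding ap_times ap_mat o_def matf_def
    by (subst vec_eq) (simp add: inner_add_left inn algebra_simps)
qed

lemma mat_add: "mat a b c d + mat a' b' c' d' = mat (a+a') (b+b') (c+c') (d+d')"
proof (rule ap_inject, rule ext)
  fix x
  show "ap (mat a b c d + mat a' b' c' d') x = ap (mat (a+a') (b+b') (c+c') (d+d')) x"
    unfolding ap_plus ap_mat matf_def
    by (simp add: algebra_simps scaleR_add_left)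
qed

lemma mat_scale: "r *\<^sub>R mat a b c d = mat (r * a) (r * b) (r * c) (r * d)"
proof (rule ap_inject, rule ext)
  fix x
  show "ap (r *\<^sub>R mat a b c d) x = ap (mat (r * a) (r * b) (r * c) (r * d)) x"
    unfolding ap_scaleR ap_mat matf_def
    by (simp add: algebra_simps scaleR_add_right)
qed

lemma mat_one: "1 = mat 1 0 0 1"
proof (rule ap_inject, rule ext)
  fix x
  show "ap 1 x = ap (mat 1 0 0 1) x"
    unfolding ap_one ap_mat matf_def using repr[of x] by simp
qed

lemma mat_inj: assumes "mat a b c d = mat a' b' c' d'" shows "a = a' \<and> b = b' \<and> c = c' \<and> d = d'"
proof -
  have "ap (mat a b c d) e1 = ap (mat a' b' c' d') e1" "ap (mat a b c d) e2 = ap (mat a' b' c' d') e2"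
    using assms by simp_all
  then show ?thesis unfolding ap_mat matf_def by (simp add: inn vec_eq)
qed

lemma mat_surj: "\<exists>a b c d. E = mat a b c d"
proof (intro exI)
  show "E = mat (ap E e1 \<bullet> e1) (ap E e2 \<bullet> e1) (ap E e1 \<bullet> e2) (ap E e2 \<bullet> e2)"
  proof (rule ap_inject, rule ext)
    fix x
    interpret L: linear "ap E" by (rule linear_ap)
    have "ap E x = ap E ((x \<bullet> e1) *\<^sub>R e1 + (x \<bullet> e2) *\<^sub>R e2)" using repr[of x] by simp
    also have "\<dots> = (x \<bullet> e1) *\<^sub>R ap E e1 + (x \<bullet> e2) *\<^sub>R ap E e2" by (simp add: L.add L.scale)
    also have "\<dots> = (x \<bullet> e1) *\<^sub>R ((ap E e1 \<bullet> e1) *\<^sub>R e1 + (ap E e1 \<bullet> e2) *\<^sub>R e2)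
                   + (x \<bullet> e2) *\<^sub>R ((ap E e2 \<bullet> e1) *\<^sub>R e1 + (ap E e2 \<bullet> e2) *\<^sub>R e2)"
      using repr[of "ap E e1"] repr[of "ap E e2"] by simp
    also have "\<dots> = ((x \<bullet> e1) * (ap E e1 \<bullet> e1) + (x \<bullet> e2) * (ap E e2 \<bullet> e1)) *\<^sub>R e1
                    + ((x \<bullet> e1) * (ap E e1 \<bullet> e2) + (x \<bullet> e2) * (ap E e2 \<bullet> e2)) *\<^sub>R e2"
      by (simp add: scaleR_add_right scaleR_add_left algebra_simps)
    also have "\<dots> = ap (mat (ap E e1 \<bullet> e1) (ap E e2 \<bullet> e1) (ap E e1 \<bullet> e2) (ap E e2 \<bullet> e2)) x"
      unfolding ap_mat matf_def by (simp add: mult.commute)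
    finally show "ap E x = ap (mat (ap E e1 \<bullet> e1) (ap E e2 \<bullet> e1) (ap E e1 \<bullet> e2) (ap E e2 \<bullet> e2)) x" .
  qed
qed

lemma mat_sq: "mat x y z (-x) * mat x y z (-x) = (x^2 + y * z) *\<^sub>R 1"
  unfolding mat_mult mat_one mat_scale by (rule mat_eqI) (simp_all add: power2_eq_square algebra_simps)

lemma exp_traceless: "exp (mat x y z (-x)) = Cf (x^2 + y * z) *\<^sub>R 1 + Sf (x^2 + y * z) *\<^sub>R mat x y z (-x)"
  by (rule exp_sq[OF mat_sq])


lemma key:
  fixes F G :: "'a endo" and t :: "nat \<Rightarrow> int"
  assumes mono: "strict_mono t" and t0: "t 0 = 1"
    and H: "\<And>n. exp (of_int (t n) *\<^sub>R F + G) = exp (of_int (t n) *\<^sub>R F) * exp G"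
  shows "F * G = G * F"
proof -
  obtain f1 f2 f3 f4 where F: "F = mat f1 f2 f3 f4" using mat_surj by blast
  obtain g1 g2 g3 g4 where G: "G = mat g1 g2 g3 g4" using mat_surj by blast
  define p where "p = (f1 - f4)/2"
  define q where "q = f2"
  define r where "r = f3"
  define tf where "tf = (f1 + f4)/2"
  define u where "u = (g1 - g4)/2"
  define v where "v = g2"
  define w where "w = g3"
  define tg where "tg = (g1 + g4)/2"
  have Fd: "F = tf *\<^sub>R 1 + mat p q r (-p)"
    unfolding F mat_one mat_scale mat_add by (rule mat_eqI) (simp_all add: p_def q_def r_def tf_def field_simps)
  have Gd: "G = tg *\<^sub>R 1 + mat u v w (-u)"
    unfolding G mat_one mat_scale mat_add by (rule mat_eqI) (simp_all add: u_def v_def w_def tg_def field_simps)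
  show ?thesis
  proof (rule ccontr)
    assume nc: "F * G \<noteq> G * F"
    have K: "\<not> ((q * w - r* v)/2 = 0 \<and> p* v - q * u = 0 \<and> r * u - p * w = 0)"
    proof
      assume k: "(q * w - r* v)/2 = 0 \<and> p* v - q * u = 0 \<and> r * u - p * w = 0"
      have c1: "f2 * g3 = f3 * g2" using k by (simp add: q_def r_def v_def w_def)
      have c2: "(f1 - f4) * g2 = f2 * (g1 - g4)" using k by (simp add: p_def q_def u_def v_def field_simps)
      have c3: "f3 * (g1 - g4) = (f1 - f4) * g3" using k by (simp add: p_def r_def u_def w_def field_simps)
      have "F * G = G * F" unfolding F G mat_mult
        by (intro mat_eqI; use c1 c2 c3 in algebra)
      then show False using nc by simp
    qed
    have step: "Sf ((real_of_int (t n))^2 * (p^2 + q * r)) = 0 \<and> Sf (u^2 + v * w) = 0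
              \<and> Sf ((real_of_int (t n) * p + u)^2 + (real_of_int (t n) * q + v) * (real_of_int (t n) * r + w)) = 0" for n
    proof -
      define T where "T = real_of_int (t n)"
      have T1: "T \<ge> 1" using strict_mono_int_ge[OF mono, of n] t0 unfolding T_def by simp
      have h: "exp (T *\<^sub>R F + G) = exp (T *\<^sub>R F) * exp G" using H[of n] unfolding T_def by simp
      define P where "P = T * p"
      define Q where "Q = T * q"
      define R where "R = T * r"
      have sum: "T *\<^sub>R F + G = (T * tf + tg) *\<^sub>R 1 + mat (P+u) (Q+v) (R+w) (-(P+u))"
        unfolding Fd Gd mat_one mat_scale mat_add by (rule mat_eqI) (simp_all add: P_def Q_def R_def algebra_simps)
      have tF: "T *\<^sub>R F = (T * tf) *\<^sub>R 1 + mat P Q R (-P)"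
        unfolding Fd mat_one mat_scale mat_add by (rule mat_eqI) (simp_all add: P_def Q_def R_def algebra_simps)
      define dA where "dA = P^2 + Q * R"
      define dB where "dB = u^2 + v * w"
      define dC where "dC = (P+u)^2 + (Q+v) * (R+w)"
      have h2: "exp ((T * tf + tg) *\<^sub>R 1 + mat (P+u) (Q+v) (R+w) (-(P+u)))
            = exp ((T * tf) *\<^sub>R 1 + mat P Q R (-P)) * exp (tg *\<^sub>R 1 + mat u v w (-u))"
        using h unfolding sum by (simp only: tF flip: Gd)
      have "exp (T * tf + tg) *\<^sub>R exp (mat (P+u) (Q+v) (R+w) (-(P+u)))
            = (exp (T * tf) * exp tg) *\<^sub>R (exp (mat P Q R (-P)) * exp (mat u v w (-u)))"
        using h2 unfolding exp_shift by (simp add: exp_add)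
      then have "exp (mat (P+u) (Q+v) (R+w) (-(P+u))) = exp (mat P Q R (-P)) * exp (mat u v w (-u))"
        by (simp add: exp_add)
      then have "Cf dC *\<^sub>R 1 + Sf dC *\<^sub>R mat (P+u) (Q+v) (R+w) (-(P+u))
          = (Cf dA *\<^sub>R 1 + Sf dA *\<^sub>R mat P Q R (-P)) * (Cf dB *\<^sub>R 1 + Sf dB *\<^sub>R mat u v w (-u))"
        unfolding exp_traceless dA_def dB_def dC_def .
      moreover have "Cf dC *\<^sub>R 1 + Sf dC *\<^sub>R mat (P+u) (Q+v) (R+w) (-(P+u))
          = mat (Cf dC + Sf dC * (P+u)) (Sf dC * (Q+v)) (Sf dC * (R+w)) (Cf dC - Sf dC * (P+u))"
        unfolding mat_one mat_scale mat_add by (rule mat_eqI) (simp_all add: algebra_simps)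
      moreover have "(Cf dA *\<^sub>R 1 + Sf dA *\<^sub>R mat P Q R (-P)) * (Cf dB *\<^sub>R 1 + Sf dB *\<^sub>R mat u v w (-u))
          = mat (Cf dA + Sf dA * P) (Sf dA * Q) (Sf dA * R) (Cf dA - Sf dA * P)
            * mat (Cf dB + Sf dB * u) (Sf dB* v) (Sf dB * w) (Cf dB - Sf dB * u)"
        unfolding mat_one mat_scale mat_add by (intro arg_cong2[where f="(*)"] mat_eqI) (simp_all add: algebra_simps)
      ultimately have "mat (Cf dC + Sf dC * (P+u)) (Sf dC * (Q+v)) (Sf dC * (R+w)) (Cf dC - Sf dC * (P+u))
          = mat (Cf dA + Sf dA * P) (Sf dA * Q) (Sf dA * R) (Cf dA - Sf dA * P)
            * mat (Cf dB + Sf dB * u) (Sf dB* v) (Sf dB * w) (Cf dB - Sf dB * u)" by simp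
      then have eqs: "Cf dC + Sf dC * (P+u) = (Cf dA + Sf dA * P) * (Cf dB + Sf dB * u) + (Sf dA * Q) * (Sf dB * w)"
         "Sf dC * (Q+v) = (Cf dA + Sf dA * P) * (Sf dB* v) + (Sf dA * Q) * (Cf dB - Sf dB * u)"
         "Sf dC * (R+w) = (Sf dA * R) * (Cf dB + Sf dB * u) + (Cf dA - Sf dA * P) * (Sf dB * w)"
         "Cf dC - Sf dC * (P+u) = (Sf dA * R) * (Sf dB* v) + (Cf dA - Sf dA * P) * (Cf dB - Sf dB * u)"
        unfolding mat_mult by (drule_tac mat_inj; simp)+
      have KT: "\<not> ((Q * w - R* v)/2 = 0 \<and> P* v - Q * u = 0 \<and> R * u - P * w = 0)"
      proof
        assume "(Q * w - R* v)/2 = 0 \<and> P* v - Q * u = 0 \<and> R * u - P * w = 0"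
        then have "T * ((q * w - r* v)/2) = 0 \<and> T * (p* v - q * u) = 0 \<and> T * (r * u - p * w) = 0"
          unfolding P_def Q_def R_def by (simp add: algebra_simps)
        then show False using K T1 by simp
      qed
      have res: "Sf dA = 0 \<and> Sf dB = 0 \<and> Sf dC = 0"
        unfolding dA_def dB_def dC_def
      proof (rule L1real[OF _ _ _ KT])
        show "Sf ((P+u)^2 + (Q+v) * (R+w)) * (P + u) = Sf (P^2 + Q * R) * Cf (u^2 + v * w) * P + Cf (P^2 + Q * R) * Sf (u^2 + v * w) * u + Sf (P^2 + Q * R) * Sf (u^2 + v * w) * ((Q * w - R* v)/2)"
          using eqs(1) eqs(4) unfolding dA_def dB_def dC_def by algebra
        show "Sf ((P+u)^2 + (Q+v) * (R+w)) * (Q + v) = Sf (P^2 + Q * R) * Cf (u^2 + v * w) * Q + Cf (P^2 + Q * R) * Sf (u^2 + v * w) * v + Sf (P^2 + Q * R) * Sf (u^2 + v * w) * (P* v - Q * u)"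
          using eqs(2) unfolding dA_def dB_def dC_def by algebra
        show "Sf ((P+u)^2 + (Q+v) * (R+w)) * (R + w) = Sf (P^2 + Q * R) * Cf (u^2 + v * w) * R + Cf (P^2 + Q * R) * Sf (u^2 + v * w) * w + Sf (P^2 + Q * R) * Sf (u^2 + v * w) * (R * u - P * w)"
          using eqs(3) unfolding dA_def dB_def dC_def by algebra
      qed
      have "dA = T^2 * (p^2 + q * r)" unfolding dA_def P_def Q_def R_def by (simp add: power2_eq_square algebra_simps)
      then show ?thesis using res unfolding T_def dB_def dC_def P_def Q_def R_def by simp
    qed
    have "(q * w - r* v)/2 = 0 \<and> p* v - q * u = 0 \<and> r * u - p * w = 0"
      by (rule main_real[OF mono t0 step])
    then show False using K by simp
  qed
qed

end

lemma mk_scale: assumes "linear f" shows "mk (\<lambda>x. r *\<^sub>R f x) = r *\<^sub>R mk f"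
proof (rule ap_inject)
  have l: "linear (\<lambda>x. r *\<^sub>R f x)" using assms by (rule linear_compose_scale_right)
  show "ap (mk (\<lambda>x. r *\<^sub>R f x)) = ap (r *\<^sub>R mk f)"
    by (simp add: fun_eq_iff ap_scaleR ap_mk[OF l] ap_mk[OF assms])
qed

theorem theorem1:
  fixes f g :: "'a::euclidean_space \<Rightarrow> 'a" and t :: "nat \<Rightarrow> int"
  assumes "DIM('a) = 2"
    and "linear f" and "linear g"
    and "strict_mono t" and "t 0 = 1"
  shows "(\<forall>n. lexp (\<lambda>x. of_int (t n) *\<^sub>R f x + g x)
               = lexp (\<lambda>x. of_int (t n) *\<^sub>R f x) \<circ> lexp g)
         \<longleftrightarrow> f \<circ> g = g \<circ> f"
proof -
  obtain e1 e2 :: 'a where B: "Basis = {e1, e2}" "e1 \<noteq> e2"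
    using assms(1) by (metis card_2_iff)
  interpret twodim e1 e2 by unfold_locales (rule B)+
  have lin1: "linear (\<lambda>x. c *\<^sub>R f x + g x)" for c
    using assms(2,3) by (intro linear_compose_add linear_compose_scale_right)
  have lin2: "linear (\<lambda>x. c *\<^sub>R f x)" for c
    using assms(2) by (intro linear_compose_scale_right)
  have L1: "lexp (\<lambda>x. c *\<^sub>R f x + g x) = ap (exp (c *\<^sub>R mk f + mk g))" for c
    using lexp_ap[OF lin1] mk_lin[OF assms(2,3)] by simp
  have L2: "lexp (\<lambda>x. c *\<^sub>R f x) = ap (exp (c *\<^sub>R mk f))" for c
    using lexp_ap[OF lin2] mk_scale[OF assms(2)] by simp
  have L3: "lexp g = ap (exp (mk g))" by (rule lexp_ap[OF assms(3)])
  have comm_iff: "f \<circ> g = g \<circ> f \<longleftrightarrow> mk f * mk g = mk g * mk f"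
  proof
    assume "f \<circ> g = g \<circ> f"
    then show "mk f * mk g = mk g * mk f"
      by (intro ap_inject) (simp add: ap_times ap_mk assms(2,3))
  next
    assume "mk f * mk g = mk g * mk f"
    then have "ap (mk f * mk g) = ap (mk g * mk f)" by simp
    then show "f \<circ> g = g \<circ> f" by (simp add: ap_times ap_mk assms(2,3))
  qed
  show ?thesis
  proof
    assume H: "\<forall>n. lexp (\<lambda>x. of_int (t n) *\<^sub>R f x + g x) = lexp (\<lambda>x. of_int (t n) *\<^sub>R f x) \<circ> lexp g"
    have "exp (of_int (t n) *\<^sub>R mk f + mk g) = exp (of_int (t n) *\<^sub>R mk f) * exp (mk g)" for n
    proof (rule ap_inject)
      show "ap (exp (of_int (t n) *\<^sub>R mk f + mk g)) = ap (exp (of_int (t n) *\<^sub>R mk f) * exp (mk g))"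
        using H[rule_format, of n] unfolding L1 L2 L3 ap_times .
    qed
    then have "mk f * mk g = mk g * mk f" by (rule key[OF assms(4,5)])
    then show "f \<circ> g = g \<circ> f" using comm_iff by simp
  next
    assume "f \<circ> g = g \<circ> f"
    then have c: "mk f * mk g = mk g * mk f" using comm_iff by simp
    show "\<forall>n. lexp (\<lambda>x. of_int (t n) *\<^sub>R f x + g x) = lexp (\<lambda>x. of_int (t n) *\<^sub>R f x) \<circ> lexp g"
    proof
      fix n
      have "(of_int (t n) *\<^sub>R mk f) * mk g = mk g * (of_int (t n) *\<^sub>R mk f)" using c by simp
      then have "exp (of_int (t n) *\<^sub>R mk f + mk g) = exp (of_int (t n) *\<^sub>R mk f) * exp (mk g)"
        by (rule exp_add_commuting)
      then show "lexp (\<lambda>x. of_int (t n) *\<^sub>R f x + g x) = lexp (\<lambda>x. of_int (t n) *\<^sub>R f x) \<circ> lexp g"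
        unfolding L1 L2 L3 by (simp add: ap_times)
    qed
  qed
qed

end
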